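(* Let $(I,\le)$ be a totally ordered set with smallest element $0$, and let $\{G_i,\pi_{ij}\}$ be a direct system of finitely generated groups indexed by $I$ with surjective homomorphisms $\pi_{ij}:G_i\to G_j$ for all $j\ge i$ (with $\pi_{ii}=\mathrm{id}$ and $\pi_{jk}\circ\pi_{ij}=\pi_{ik}$), and let $G_\infty=\varinjlim G_i$. Then for each prime $p$, $\limsup_{i\in I} RG_p(G_i)\le RG_p(G_\infty)$.
   Context: For a group $A$, $d(A)$ is the minimal number of generators and $d_p(A)=d\big(A/[A,A]A^p\big)$. For a finitely generated group $G$, $RG_p(G)=\inf_H\frac{d_p(H)-1}{[G:H]}$, the infimum over normal subgroups $H\trianglelefteq G$ of $p$-power index. The $\limsup$ is taken along the total order of $I$. *)

theory Defs
  imports "HOL-Algebra.Algebra" "HOL-Library.Extended_Real" "HOL-Library.Liminf_Limsup"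
begin

definition fin_gen :: "('a, 'b) monoid_scheme \<Rightarrow> bool" where
  "fin_gen A \<longleftrightarrow> (\<exists>S. S \<subseteq> carrier A \<and> finite S \<and> generate A S = carrier A)"

definition dgen :: "('a, 'b) monoid_scheme \<Rightarrow> nat" where
  "dgen A = (LEAST n. \<exists>S. S \<subseteq> carrier A \<and> finite S \<and> card S = n \<and> generate A S = carrier A)"

definition comm_pow_subgroup :: "nat \<Rightarrow> ('a, 'b) monoid_scheme \<Rightarrow> 'a set" where
  "comm_pow_subgroup p A = generate A
     ({x \<otimes>\<^bsub>A\<^esub> y \<otimes>\<^bsub>A\<^esub> inv\<^bsub>A\<^esub> x \<otimes>\<^bsub>A\<^esub> inv\<^bsub>A\<^esub> y | x y. x \<in> carrier A \<and> y \<in> carrier A}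
      \<union> {x [^]\<^bsub>A\<^esub> p | x. x \<in> carrier A})"

definition dp :: "nat \<Rightarrow> ('a, 'b) monoid_scheme \<Rightarrow> nat" where
  "dp p A = dgen (A Mod comm_pow_subgroup p A)"

definition RG :: "nat \<Rightarrow> 'a monoid \<Rightarrow> real" where
  "RG p G = Inf {(real (dp p (G\<lparr>carrier := H\<rparr>)) - 1) / real (card (rcosets\<^bsub>G\<^esub> H)) | H.
                  H \<lhd> G \<and> (\<exists>k::nat. card (rcosets\<^bsub>G\<^esub> H) = p ^ k)}"

text \<open>Direct limit of a direct system (G_i, pi i j) over a directed (here totally ordered) index type:
  equivalence classes of pairs (i,x), x in G_i, where (i,x) ~ (j,y) iff they agree in some G_k, k >= i,j.\<close>
definition dl_rel :: "('i::linorder \<Rightarrow> 'a monoid) \<Rightarrow> ('i \<Rightarrow> 'i \<Rightarrow> 'a \<Rightarrow> 'a) \<Rightarrow> (('i \<times> 'a) \<times> ('i \<times> 'a)) set" where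
  "dl_rel G \<pi> = {((i,x),(j,y)). x \<in> carrier (G i) \<and> y \<in> carrier (G j) \<and>
                    (\<exists>k. i \<le> k \<and> j \<le> k \<and> \<pi> i k x = \<pi> j k y)}"

definition dirlim :: "('i::linorder \<Rightarrow> 'a monoid) \<Rightarrow> ('i \<Rightarrow> 'i \<Rightarrow> 'a \<Rightarrow> 'a) \<Rightarrow> ('i \<times> 'a) set monoid" where
  "dirlim G \<pi> = \<lparr>carrier = (SIGMA i:UNIV. carrier (G i)) // dl_rel G \<pi>,
     monoid.mult = (\<lambda>A B. let a = (SOME a. a \<in> A); b = (SOME b. b \<in> B); k = max (fst a) (fst b) in
               dl_rel G \<pi> `` {(k, \<pi> (fst a) k (snd a) \<otimes>\<^bsub>G k\<^esub> \<pi> (fst b) k (snd b))}),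
     monoid.one = dl_rel G \<pi> `` {(undefined, \<one>\<^bsub>G undefined\<^esub>)}\<rparr>"

end

theory Submission
  imports Defs
begin

locale dsys =
  fixes G :: "'i::linorder \<Rightarrow> 'a monoid"
    and \<pi> :: "'i \<Rightarrow> 'i \<Rightarrow> 'a \<Rightarrow> 'a"
  assumes grp: "\<And>i. group (G i)"
    and hom: "\<And>i j. i \<le> j \<Longrightarrow> \<pi> i j \<in> hom (G i) (G j)"
    and surj: "\<And>i j. i \<le> j \<Longrightarrow> \<pi> i j ` carrier (G i) = carrier (G j)"
    and refl: "\<And>i x. x \<in> carrier (G i) \<Longrightarrow> \<pi> i i x = x"
    and comp: "\<And>i j k x. i \<le> j \<Longrightarrow> j \<le> k \<Longrightarrow> x \<in> carrier (G i) \<Longrightarrow>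
                 \<pi> j k (\<pi> i j x) = \<pi> i k x"
begin

abbreviation "R \<equiv> dl_rel G \<pi>"
definition phi :: "'i \<Rightarrow> 'a \<Rightarrow> ('i \<times> 'a) set" where "phi i x = R `` {(i,x)}"
abbreviation "L \<equiv> dirlim G \<pi>"

lemma pi_closed: "i \<le> j \<Longrightarrow> x \<in> carrier (G i) \<Longrightarrow> \<pi> i j x \<in> carrier (G j)"
  using hom by (auto simp: hom_def Pi_def)

lemma pi_mult: "i \<le> j \<Longrightarrow> x \<in> carrier (G i) \<Longrightarrow> y \<in> carrier (G i) \<Longrightarrow>
   \<pi> i j (x \<otimes>\<^bsub>G i\<^esub> y) = \<pi> i j x \<otimes>\<^bsub>G j\<^esub> \<pi> i j y"
  using hom by (auto simp: hom_def)

lemma pi_one: "i \<le> j \<Longrightarrow> \<pi> i j \<one>\<^bsub>G i\<^esub> = \<one>\<^bsub>G j\<^esub>"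
  using hom grp by (meson group_hom.hom_one group_hom.intro group_hom_axioms.intro)

lemma pi_inv: "i \<le> j \<Longrightarrow> x \<in> carrier (G i) \<Longrightarrow> \<pi> i j (inv\<^bsub>G i\<^esub> x) = inv\<^bsub>G j\<^esub> \<pi> i j x"
  using hom grp by (meson group_hom.hom_inv group_hom.intro group_hom_axioms.intro)

lemma R_iff: "((i,x),(j,y)) \<in> R \<longleftrightarrow> x \<in> carrier (G i) \<and> y \<in> carrier (G j) \<and>
                    (\<exists>k. i \<le> k \<and> j \<le> k \<and> \<pi> i k x = \<pi> j k y)"
  by (simp add: dl_rel_def)

lemma R_ev:
  assumes "((i,x),(j,y)) \<in> R"
  shows "\<exists>m1. i \<le> m1 \<and> j \<le> m1 \<and> (\<forall>m\<ge>m1. \<pi> i m x = \<pi> j m y)"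
proof -
  from assms obtain k where k: "i \<le> k" "j \<le> k" "\<pi> i k x = \<pi> j k y"
    and x: "x \<in> carrier (G i)" and y: "y \<in> carrier (G j)" by (auto simp: R_iff)
  have "\<forall>m\<ge>k. \<pi> i m x = \<pi> j m y"
  proof (intro allI impI)
    fix m assume "k \<le> m"
    then show "\<pi> i m x = \<pi> j m y" using comp[OF k(1) \<open>k\<le>m\<close> x] comp[OF k(2) \<open>k\<le>m\<close> y] k(3) by simp
  qed
  then show ?thesis using k by blast
qed

lemma equiv_R: "equiv (SIGMA i:UNIV. carrier (G i)) R"
proof (rule equivI)
  show "refl_on (SIGMA i:UNIV. carrier (G i)) R"
    by (auto simp: refl_on_def dl_rel_def)
  show "sym R" by (auto simp: sym_def dl_rel_def)
  show "R \<subseteq> (SIGMA i:UNIV. carrier (G i)) \<times> (SIGMA i:UNIV. carrier (G i))"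
    by (auto simp: dl_rel_def)
  show "trans R"
  proof (rule transI)
    fix a b c assume ab: "(a,b) \<in> R" and bc: "(b,c) \<in> R"
    obtain i x j y l z where abc: "a = (i,x)" "b = (j,y)" "c = (l,z)" by (metis prod.exhaust)
    from R_ev[of i x j y] ab abc obtain m1 where m1: "i \<le> m1" "j \<le> m1" "\<forall>m\<ge>m1. \<pi> i m x = \<pi> j m y" by auto
    from R_ev[of j y l z] bc abc obtain m2 where m2: "j \<le> m2" "l \<le> m2" "\<forall>m\<ge>m2. \<pi> j m y = \<pi> l m z" by auto
    have "\<pi> i (max m1 m2) x = \<pi> l (max m1 m2) z" using m1 m2 by simp
    moreover have "i \<le> max m1 m2" "l \<le> max m1 m2" using m1 m2 by (auto simp: le_max_iff_disj)
    ultimately show "(a,c) \<in> R" using ab bc abc by (auto simp: R_iff)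
  qed
qed

lemma phi_eq_iff: "x \<in> carrier (G i) \<Longrightarrow> y \<in> carrier (G j) \<Longrightarrow>
   phi i x = phi j y \<longleftrightarrow> ((i,x),(j,y)) \<in> R"
  unfolding phi_def using equiv_class_eq_iff[OF equiv_R, of "(i,x)" "(j,y)"] by auto

lemma phi_push: "i \<le> k \<Longrightarrow> x \<in> carrier (G i) \<Longrightarrow> phi k (\<pi> i k x) = phi i x"
  apply (subst phi_eq_iff)
    apply (auto simp: pi_closed)
  apply (auto simp: R_iff pi_closed)
  apply (rule exI[of _ k])
  using refl pi_closed by auto

lemma in_phi: "x \<in> carrier (G i) \<Longrightarrow> (i,x) \<in> phi i x"
  unfolding phi_def using equiv_R by (auto simp: equiv_def refl_on_def)

lemma carrier_L: "carrier L = {phi i x | i x. x \<in> carrier (G i)}"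
  by (auto simp: dirlim_def quotient_def phi_def)

lemma mem_phi: "a \<in> phi i x \<Longrightarrow> snd a \<in> carrier (G (fst a)) \<and> phi (fst a) (snd a) = phi i x"
proof -
  assume a: "a \<in> phi i x"
  obtain j y where aj: "a = (j,y)" by (metis prod.exhaust)
  from a aj have r: "((i,x),(j,y)) \<in> R" by (simp add: phi_def)
  then have "x \<in> carrier (G i)" "y \<in> carrier (G j)" by (auto simp: R_iff)
  then show ?thesis using r aj phi_eq_iff[of y j x i] equiv_R by (auto elim: equivE symE)
qed

lemma mult_key:
  assumes x: "x \<in> carrier (G i)" and y: "y \<in> carrier (G j)" and ik: "i \<le> k" and jk: "j \<le> k"
  shows "phi i x \<otimes>\<^bsub>L\<^esub> phi j y = phi k (\<pi> i k x \<otimes>\<^bsub>G k\<^esub> \<pi> j k y)"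
proof -
  define a where "a = (SOME a. a \<in> phi i x)"
  define b where "b = (SOME b. b \<in> phi j y)"
  have a: "a \<in> phi i x" unfolding a_def using in_phi[OF x] by (rule someI)
  have b: "b \<in> phi j y" unfolding b_def using in_phi[OF y] by (rule someI)
  obtain i' x' where a': "a = (i',x')" by (metis prod.exhaust)
  obtain j' y' where b': "b = (j',y')" by (metis prod.exhaust)
  from mem_phi[OF a] a' have x': "x' \<in> carrier (G i')" and ex: "phi i' x' = phi i x" by auto
  from mem_phi[OF b] b' have y': "y' \<in> carrier (G j')" and ey: "phi j' y' = phi j y" by auto
  define k' where "k' = max i' j'"
  have lhs: "phi i x \<otimes>\<^bsub>L\<^esub> phi j y = phi k' (\<pi> i' k' x' \<otimes>\<^bsub>G k'\<^esub> \<pi> j' k' y')"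
  proof -
    have "(SOME a. ((i,x),a) \<in> R) = a" "(SOME b. ((j,y),b) \<in> R) = b" by (simp_all add: a_def b_def phi_def)
    then show ?thesis by (simp add: dirlim_def a' b' k'_def Let_def phi_def)
  qed
  from R_ev[of i' x' i x] ex x x' phi_eq_iff obtain m1 where
    m1: "i' \<le> m1" "i \<le> m1" "\<forall>m\<ge>m1. \<pi> i' m x' = \<pi> i m x" by metis
  from R_ev[of j' y' j y] ey y y' phi_eq_iff obtain m2 where
    m2: "j' \<le> m2" "j \<le> m2" "\<forall>m\<ge>m2. \<pi> j' m y' = \<pi> j m y" by metis
  define m where "m = max (max m1 m2) (max k k')"
  have le: "m1 \<le> m" "m2 \<le> m" "k \<le> m" "k' \<le> m" "i' \<le> k'" "j' \<le> k'"
    by (auto simp: m_def k'_def le_max_iff_disj)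
  have "phi k' (\<pi> i' k' x' \<otimes>\<^bsub>G k'\<^esub> \<pi> j' k' y') = phi m (\<pi> k' m (\<pi> i' k' x' \<otimes>\<^bsub>G k'\<^esub> \<pi> j' k' y'))"
    using le by (simp add: phi_push pi_closed x' y' monoid.m_closed group.is_monoid grp)
  also have "\<pi> k' m (\<pi> i' k' x' \<otimes>\<^bsub>G k'\<^esub> \<pi> j' k' y') = \<pi> i' m x' \<otimes>\<^bsub>G m\<^esub> \<pi> j' m y'"
    using le by (simp add: pi_mult pi_closed x' y' comp)
  also have "\<dots> = \<pi> i m x \<otimes>\<^bsub>G m\<^esub> \<pi> j m y" using m1 m2 le by simp
  also have "\<dots> = \<pi> k m (\<pi> i k x \<otimes>\<^bsub>G k\<^esub> \<pi> j k y)"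
    using le ik jk by (simp add: pi_mult pi_closed x y comp)
  also have "phi m \<dots> = phi k (\<pi> i k x \<otimes>\<^bsub>G k\<^esub> \<pi> j k y)"
    using le ik jk by (simp add: phi_push pi_closed x y monoid.m_closed group.is_monoid grp)
  finally show ?thesis using lhs by simp
qed

lemma one_L: "\<one>\<^bsub>L\<^esub> = phi undefined \<one>\<^bsub>G undefined\<^esub>"
  by (simp add: dirlim_def phi_def)

lemma one_L': "\<one>\<^bsub>L\<^esub> = phi i \<one>\<^bsub>G i\<^esub>"
proof -
  define m where "m = max i undefined"
  have "phi i \<one>\<^bsub>G i\<^esub> = phi m \<one>\<^bsub>G m\<^esub>"
    using phi_push[of i m "\<one>\<^bsub>G i\<^esub>"] pi_one[of i m] by (simp add: m_def group.is_monoid grp)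
  also have "\<dots> = phi undefined \<one>\<^bsub>G undefined\<^esub>"
    using phi_push[of undefined m "\<one>\<^bsub>G undefined\<^esub>"] pi_one[of undefined m] by (simp add: m_def group.is_monoid grp)
  finally show ?thesis by (simp add: one_L)
qed

lemma phi_closed: "x \<in> carrier (G i) \<Longrightarrow> phi i x \<in> carrier L"
  by (auto simp: carrier_L)

lemma mult_same: "x \<in> carrier (G i) \<Longrightarrow> y \<in> carrier (G i) \<Longrightarrow>
   phi i x \<otimes>\<^bsub>L\<^esub> phi i y = phi i (x \<otimes>\<^bsub>G i\<^esub> y)"
  using mult_key[of x i y i i] refl by simp

lemma group_L: "group L"
proof (rule groupI)
  fix A B assume "A \<in> carrier L" "B \<in> carrier L"
  then obtain i x j y where "x \<in> carrier (G i)" "y \<in> carrier (G j)" "A = phi i x" "B = phi j y"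
    by (auto simp: carrier_L)
  then show "A \<otimes>\<^bsub>L\<^esub> B \<in> carrier L"
    by (simp add: mult_key[of x i y j "max i j"] phi_closed pi_closed group.is_monoid grp monoid.m_closed)
next
  show "\<one>\<^bsub>L\<^esub> \<in> carrier L" by (simp add: one_L phi_closed group.is_monoid grp)
next
  fix A B C assume "A \<in> carrier L" "B \<in> carrier L" "C \<in> carrier L"
  then obtain i x j y l z where xyz: "x \<in> carrier (G i)" "y \<in> carrier (G j)" "z \<in> carrier (G l)"
     "A = phi i x" "B = phi j y" "C = phi l z"
    by (auto simp: carrier_L)
  define k where "k = max i (max j l)"
  have le: "i \<le> k" "j \<le> k" "l \<le> k" by (auto simp: k_def le_max_iff_disj)
  have c: "\<pi> i k x \<in> carrier (G k)" "\<pi> j k y \<in> carrier (G k)" "\<pi> l k z \<in> carrier (G k)"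
    using le xyz by (auto simp: pi_closed)
  have e: "A = phi k (\<pi> i k x)" "B = phi k (\<pi> j k y)" "C = phi k (\<pi> l k z)"
    using le xyz by (auto simp: phi_push)
  show "A \<otimes>\<^bsub>L\<^esub> B \<otimes>\<^bsub>L\<^esub> C = A \<otimes>\<^bsub>L\<^esub> (B \<otimes>\<^bsub>L\<^esub> C)"
    unfolding e using c
    by (simp add: mult_same group.is_monoid grp monoid.m_closed monoid.m_assoc)
next
  fix A assume "A \<in> carrier L"
  then obtain i x where x: "x \<in> carrier (G i)" "A = phi i x" by (auto simp: carrier_L)
  show "\<one>\<^bsub>L\<^esub> \<otimes>\<^bsub>L\<^esub> A = A"
    using x by (simp add: one_L'[of i] mult_same group.is_monoid grp)
  show "\<exists>B\<in>carrier L. B \<otimes>\<^bsub>L\<^esub> A = \<one>\<^bsub>L\<^esub>"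
    using x by (intro bexI[of _ "phi i (inv\<^bsub>G i\<^esub> x)"])
       (simp_all add: one_L'[of i] mult_same group.is_monoid grp phi_closed group.l_inv)
qed

lemma phi_hom: "phi i \<in> hom (G i) L"
  by (auto simp: hom_def phi_closed mult_same)

lemma phi_surj: "phi i ` carrier (G i) = carrier L"
proof
  show "phi i ` carrier (G i) \<subseteq> carrier L" by (auto simp: phi_closed)
  show "carrier L \<subseteq> phi i ` carrier (G i)"
  proof
    fix A assume "A \<in> carrier L"
    then obtain j y where y: "y \<in> carrier (G j)" "A = phi j y" by (auto simp: carrier_L)
    define m where "m = max i j"
    have le: "i \<le> m" "j \<le> m" by (auto simp: m_def)
    have "\<pi> j m y \<in> \<pi> i m ` carrier (G i)" using surj[OF le(1)] pi_closed[OF le(2) y(1)] by simp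
    then obtain x where x: "x \<in> carrier (G i)" "\<pi> j m y = \<pi> i m x" by auto
    have e1: "phi j y = phi m (\<pi> j m y)" using y le phi_push[of j m y] by simp
    have e2: "phi i x = phi m (\<pi> i m x)" using x le phi_push[of i m x] by simp
    have "A = phi i x" using e1 e2 x y by simp
    then show "A \<in> phi i ` carrier (G i)" using x by auto
  qed
qed

lemma phi_one_iff: "x \<in> carrier (G i) \<Longrightarrow> phi i x = \<one>\<^bsub>L\<^esub> \<Longrightarrow> \<exists>k\<ge>i. \<pi> i k x = \<one>\<^bsub>G k\<^esub>"
  unfolding one_L'[of i]
  by (auto simp: phi_eq_iff group.is_monoid grp R_iff pi_one refl)

end


definition gens :: "nat \<Rightarrow> ('a, 'b) monoid_scheme \<Rightarrow> 'a set" where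
  "gens p A = {x \<otimes>\<^bsub>A\<^esub> y \<otimes>\<^bsub>A\<^esub> inv\<^bsub>A\<^esub> x \<otimes>\<^bsub>A\<^esub> inv\<^bsub>A\<^esub> y | x y. x \<in> carrier A \<and> y \<in> carrier A}
      \<union> {x [^]\<^bsub>A\<^esub> p | x. x \<in> carrier A}"

lemma Phi_def': "comm_pow_subgroup p A = generate A (gens p A)"
  by (simp add: comm_pow_subgroup_def gens_def)

lemma gens_sub: "group A \<Longrightarrow> gens p A \<subseteq> carrier A"
proof
  fix z assume g: "group A" and "z \<in> gens p A"
  then consider (c) x y where "x \<in> carrier A" "y \<in> carrier A" "z = x \<otimes>\<^bsub>A\<^esub> y \<otimes>\<^bsub>A\<^esub> inv\<^bsub>A\<^esub> x \<otimes>\<^bsub>A\<^esub> inv\<^bsub>A\<^esub> y"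
        | (q) x where "x \<in> carrier A" "z = x [^]\<^bsub>A\<^esub> p" unfolding gens_def by blast
  then show "z \<in> carrier A"
    by cases (simp_all add: g group.is_monoid monoid.m_closed group.inv_closed monoid.nat_pow_closed)
qed

lemma Phi_subgroup: "group A \<Longrightarrow> subgroup (comm_pow_subgroup p A) A"
  by (simp add: Phi_def' group.generate_is_subgroup gens_sub)

lemma comm_in_Phi: "group A \<Longrightarrow> x \<in> carrier A \<Longrightarrow> y \<in> carrier A \<Longrightarrow>
  x \<otimes>\<^bsub>A\<^esub> y \<otimes>\<^bsub>A\<^esub> inv\<^bsub>A\<^esub> x \<otimes>\<^bsub>A\<^esub> inv\<^bsub>A\<^esub> y \<in> comm_pow_subgroup p A"
  unfolding Phi_def' by (rule generate.incl) (auto simp: gens_def)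

lemma pow_in_Phi: "group A \<Longrightarrow> x \<in> carrier A \<Longrightarrow> x [^]\<^bsub>A\<^esub> p \<in> comm_pow_subgroup p A"
  unfolding Phi_def' by (rule generate.incl) (auto simp: gens_def)

lemma Phi_normal:
  fixes A :: "('a,'b) monoid_scheme" (structure)
  assumes gA: "group A" shows "comm_pow_subgroup p A \<lhd> A"
proof -
  interpret group A by (rule gA)
  let ?N = "comm_pow_subgroup p A"
  have sg: "subgroup ?N A" by (rule Phi_subgroup[OF gA])
  show ?thesis unfolding normal_inv_iff
  proof (intro conjI sg ballI)
    fix x h assume x: "x \<in> carrier A" and h: "h \<in> ?N"
    have hc: "h \<in> carrier A" using h sg subgroup.subset by blast
    have "x \<otimes> h \<otimes> inv x = (x \<otimes> h \<otimes> inv x \<otimes> inv h) \<otimes> h"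
      using x hc by (simp add: m_assoc)
    moreover have "x \<otimes> h \<otimes> inv x \<otimes> inv h \<in> ?N" using comm_in_Phi[OF gA x hc] .
    ultimately show "x \<otimes> h \<otimes> inv x \<in> ?N" using h sg subgroup.m_closed by metis
  qed
qed

lemma Phi_img:
  assumes gA: "group A" and gB: "group B" and f: "f \<in> hom A B" and fs: "f ` carrier A = carrier B"
  shows "f ` comm_pow_subgroup p A = comm_pow_subgroup p B"
proof -
  interpret gh: group_hom A B f using gA gB f by (simp add: group_hom_def group_hom_axioms_def)
  have "f ` gens p A = gens p B"
  proof
    show "f ` gens p A \<subseteq> gens p B"
    proof
      fix z assume "z \<in> f ` gens p A"
      then obtain w where w: "w \<in> gens p A" "z = f w" by blast
      from w(1) consider (c) x y where "x \<in> carrier A" "y \<in> carrier A" "w = x \<otimes>\<^bsub>A\<^esub> y \<otimes>\<^bsub>A\<^esub> inv\<^bsub>A\<^esub> x \<otimes>\<^bsub>A\<^esub> inv\<^bsub>A\<^esub> y"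
        | (q) x where "x \<in> carrier A" "w = x [^]\<^bsub>A\<^esub> p" unfolding gens_def by blast
      then show "z \<in> gens p B"
      proof cases
        case c
        then have "z = f x \<otimes>\<^bsub>B\<^esub> f y \<otimes>\<^bsub>B\<^esub> inv\<^bsub>B\<^esub> f x \<otimes>\<^bsub>B\<^esub> inv\<^bsub>B\<^esub> f y" using w by simp
        moreover have "f x \<in> carrier B" "f y \<in> carrier B" using c by auto
        ultimately show ?thesis unfolding gens_def by blast
      next
        case q
        then have "z = f x [^]\<^bsub>B\<^esub> p" using w by (simp add: gh.hom_nat_pow)
        moreover have "f x \<in> carrier B" using q by auto
        ultimately show ?thesis unfolding gens_def by blast
      qed
    qed
    show "gens p B \<subseteq> f ` gens p A"
    proof
      fix z assume "z \<in> gens p B"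
      then consider (c) x y where "x \<in> carrier B" "y \<in> carrier B" "z = x \<otimes>\<^bsub>B\<^esub> y \<otimes>\<^bsub>B\<^esub> inv\<^bsub>B\<^esub> x \<otimes>\<^bsub>B\<^esub> inv\<^bsub>B\<^esub> y"
        | (q) x where "x \<in> carrier B" "z = x [^]\<^bsub>B\<^esub> p" by (auto simp: gens_def)
      then show "z \<in> f ` gens p A"
      proof cases
        case c
        then obtain a b where ab: "a \<in> carrier A" "b \<in> carrier A" "x = f a" "y = f b" using fs by blast
        then have "z = f (a \<otimes>\<^bsub>A\<^esub> b \<otimes>\<^bsub>A\<^esub> inv\<^bsub>A\<^esub> a \<otimes>\<^bsub>A\<^esub> inv\<^bsub>A\<^esub> b)" using c by simp
        moreover have "a \<otimes>\<^bsub>A\<^esub> b \<otimes>\<^bsub>A\<^esub> inv\<^bsub>A\<^esub> a \<otimes>\<^bsub>A\<^esub> inv\<^bsub>A\<^esub> b \<in> gens p A"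
          unfolding gens_def using ab(1,2) by blast
        ultimately show ?thesis by (rule image_eqI)
      next
        case q
        then obtain a where ab: "a \<in> carrier A" "x = f a" using fs by blast
        then have "z = f (a [^]\<^bsub>A\<^esub> p)" using q by (simp add: gh.hom_nat_pow)
        moreover have "a [^]\<^bsub>A\<^esub> p \<in> gens p A"
          unfolding gens_def using ab(1) by blast
        ultimately show ?thesis by (rule image_eqI)
      qed
    qed
  qed
  then show ?thesis unfolding Phi_def' using gh.generate_img[OF gens_sub[of A p, OF gA]] by simp
qed

lemma index_mono:
  fixes A :: "('a,'b) monoid_scheme" (structure)
  assumes gA: "group A" and N: "subgroup N A" and K: "subgroup K A" and NK: "N \<subseteq> K"
    and fin: "finite (rcosets\<^bsub>A\<^esub> N)"
  shows "card (rcosets\<^bsub>A\<^esub> K) \<le> card (rcosets\<^bsub>A\<^esub> N) \<and>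
         (card (rcosets\<^bsub>A\<^esub> K) = card (rcosets\<^bsub>A\<^esub> N) \<longrightarrow> K = N)"
proof -
  interpret group A by (rule gA)
  define F where "F C = (\<Union>c\<in>C. K #> c)" for C
  have Kc: "K \<subseteq> carrier A" "N \<subseteq> carrier A" using K N subgroup.subset by auto
  have Fc: "F (N #> a) = K #> a" if a: "a \<in> carrier A" for a
  proof -
    have "K #> c = K #> a" if "c \<in> N #> a" for c
    proof -
      from that obtain n where n: "n \<in> N" "c = n \<otimes> a" by (auto simp: r_coset_def)
      have nc: "n \<in> carrier A" using n Kc by auto
      have "K #> c = (K #> n) #> a" using n a Kc nc by (simp add: coset_mult_assoc)
      also have "K #> n = K" using n NK by (intro subgroup.rcos_const[OF K gA]) blast
      finally show ?thesis .
    qed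
    then have "F (N #> a) = (\<Union>c\<in>N #> a. K #> a)" unfolding F_def by (intro SUP_cong refl)
    moreover have "a \<in> N #> a" using a N by (simp add: rcos_self)
    ultimately show ?thesis by blast
  qed
  have img: "F ` (rcosets N) = rcosets K"
  proof
    show "F ` (rcosets N) \<subseteq> rcosets K"
    proof
      fix D assume "D \<in> F ` (rcosets N)"
      then obtain C where C: "C \<in> rcosets N" "D = F C" by blast
      then obtain a where a: "a \<in> carrier A" "C = N #> a" unfolding RCOSETS_def by blast
      show "D \<in> rcosets K" using C a Fc[OF a(1)] rcosetsI[OF Kc(1) a(1)] by simp
    qed
    show "rcosets K \<subseteq> F ` (rcosets N)"
    proof
      fix C assume "C \<in> rcosets K"
      then obtain a where a: "a \<in> carrier A" "C = K #> a" by (auto simp: RCOSETS_def)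
      then have "C = F (N #> a)" using Fc by simp
      moreover have "N #> a \<in> rcosets N" using a Kc by (simp add: rcosetsI)
      ultimately show "C \<in> F ` (rcosets N)" by blast
    qed
  qed
  have le: "card (rcosets K) \<le> card (rcosets N)" using img card_image_le[OF fin, of F] by simp
  moreover have "K = N" if eq: "card (rcosets K) = card (rcosets N)"
  proof
    show "N \<subseteq> K" by (rule NK)
    have inj: "inj_on F (rcosets N)" using eq img fin by (intro eq_card_imp_inj_on) simp_all
    show "K \<subseteq> N"
    proof
      fix x assume x: "x \<in> K"
      then have xc: "x \<in> carrier A" using Kc by auto
      have "K #> x = K" by (rule subgroup.rcos_const[OF K gA x])
      moreover have "K #> \<one> = K" using Kc by simp
      ultimately have "F (N #> x) = F (N #> \<one>)" using Fc[OF xc] Fc[OF one_closed] by simp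
      moreover have "N #> x \<in> rcosets N" by (rule rcosetsI[OF Kc(2) xc])
      moreover have "N #> \<one> \<in> rcosets N" by (rule rcosetsI[OF Kc(2) one_closed])
      ultimately have "N #> x = N #> \<one>" using inj_onD[OF inj] by blast
      then have "N #> x = N" using Kc by simp
      then show "x \<in> N" using rcos_self[OF xc N] by simp
    qed
  qed
  ultimately show ?thesis by blast
qed


lemma surj_hom_index:
  assumes gA: "group A" and gB: "group B" and f: "f \<in> hom A B" and fs: "f ` carrier A = carrier B"
    and N: "N \<lhd> A" and M: "M \<lhd> B" and NM: "f ` N \<subseteq> M"
    and fin: "finite (rcosets\<^bsub>A\<^esub> N)"
  shows "card (rcosets\<^bsub>B\<^esub> M) \<le> card (rcosets\<^bsub>A\<^esub> N) \<and>
         (card (rcosets\<^bsub>B\<^esub> M) = card (rcosets\<^bsub>A\<^esub> N) \<longrightarrow> {x \<in> carrier A. f x \<in> M} = N)"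
proof -
  interpret A: group A by (rule gA)
  interpret B: group B by (rule gB)
  define h where "h = (\<lambda>a. M #>\<^bsub>B\<^esub> f a)"
  have gQ: "group (B Mod M)" using M normal.factorgroup_is_group by blast
  have hh: "h \<in> hom A (B Mod M)"
    using hom_compose[OF f normal.r_coset_hom_Mod[OF M]] by (simp add: h_def comp_def)
  interpret gh: group_hom A "B Mod M" h using gA gQ hh by (simp add: group_hom_def group_hom_axioms_def)
  have hs: "h ` carrier A = carrier (B Mod M)"
  proof
    show "h ` carrier A \<subseteq> carrier (B Mod M)" using gh.hom_closed by blast
    show "carrier (B Mod M) \<subseteq> h ` carrier A"
    proof
      fix C assume "C \<in> carrier (B Mod M)"
      then obtain b where b: "b \<in> carrier B" "C = M #>\<^bsub>B\<^esub> b" by (auto simp: FactGroup_def RCOSETS_def)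
      then obtain a where "a \<in> carrier A" "b = f a" using fs by blast
      then show "C \<in> h ` carrier A" using b by (auto simp: h_def)
    qed
  qed
  have Ms: "subgroup M B" using M normal_imp_subgroup by blast
  have ker: "kernel A (B Mod M) h = {x \<in> carrier A. f x \<in> M}"
  proof -
    have "M #>\<^bsub>B\<^esub> f x = M \<longleftrightarrow> f x \<in> M" if "x \<in> carrier A" for x
    proof -
      have fx: "f x \<in> carrier B" using f that by (auto simp: hom_def)
      show ?thesis using B.rcos_self[OF fx Ms] subgroup.rcos_const[OF Ms gB] by auto
    qed
    then show ?thesis by (auto simp: kernel_def h_def)
  qed
  have iso: "(\<lambda>Y0. the_elem (h`Y0)) \<in> iso (A Mod kernel A (B Mod M) h) (B Mod M)"
    by (rule gh.FactGroup_iso_set[OF hs])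
  then have "card (rcosets\<^bsub>A\<^esub> (kernel A (B Mod M) h)) = card (rcosets\<^bsub>B\<^esub> M)"
    by (auto simp: iso_def FactGroup_def dest: bij_betw_same_card)
  then have ceq: "card (rcosets\<^bsub>A\<^esub> {x \<in> carrier A. f x \<in> M}) = card (rcosets\<^bsub>B\<^esub> M)" by (simp add: ker)
  have Ksg: "subgroup {x \<in> carrier A. f x \<in> M} A"
    using gh.subgroup_kernel ker by simp
  have NK: "N \<subseteq> {x \<in> carrier A. f x \<in> M}" using NM N normal_imp_subgroup subgroup.subset by blast
  show ?thesis using index_mono[OF gA normal_imp_subgroup[OF N] Ksg NK fin] ceq by simp
qed

lemma dgen_surj:
  assumes gA: "group A" and gB: "group B" and f: "f \<in> hom A B" and fs: "f ` carrier A = carrier B"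
    and fin: "finite (carrier A)"
  shows "dgen B \<le> dgen A"
proof -
  interpret gh: group_hom A B f using gA gB f by (simp add: group_hom_def group_hom_axioms_def)
  have ex: "\<exists>S. S \<subseteq> carrier A \<and> finite S \<and> card S = card (carrier A) \<and> generate A S = carrier A"
    using fin gh.G.generate_incl[of "carrier A"] generate.incl[of _ "carrier A" A] by (intro exI[of _ "carrier A"]) auto
  obtain S where S: "S \<subseteq> carrier A" "finite S" "card S = dgen A" "generate A S = carrier A"
    using LeastI_ex[of "\<lambda>n. \<exists>S. S \<subseteq> carrier A \<and> finite S \<and> card S = n \<and> generate A S = carrier A"] ex
    unfolding dgen_def by blast
  have "generate B (f ` S) = carrier B" using gh.generate_img[OF S(1)] S(4) fs by simp
  moreover have "f ` S \<subseteq> carrier B" using S(1) fs by auto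
  ultimately have "dgen B \<le> card (f ` S)" unfolding dgen_def using S(2) by (intro Least_le) auto
  also have "\<dots> \<le> card S" using S(2) card_image_le by blast
  finally show ?thesis using S(3) by simp
qed


lemma pow_mod:
  fixes Q (structure) and p :: nat
  assumes gQ: "group Q" and z: "z \<in> carrier Q" and zp: "z [^] p = \<one>"
  shows "z [^] (n::nat) = z [^] (n mod p)"
proof -
  interpret group Q by (rule gQ)
  have "z [^] n = z [^] (p * (n div p) + n mod p)" by simp
  also have "\<dots> = (z [^] p) [^] (n div p) \<otimes> z [^] (n mod p)"
    using z by (simp add: nat_pow_mult nat_pow_pow)
  also have "\<dots> = z [^] (n mod p)" using zp z by simp
  finally show ?thesis .
qed

lemma finite_generate_exp:
  fixes Q (structure) and p :: nat
  assumes cQ: "comm_group Q" and p: "0 < p" and ex: "\<And>z. z \<in> carrier Q \<Longrightarrow> z [^] p = \<one>"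
  shows "finite Z \<Longrightarrow> Z \<subseteq> carrier Q \<Longrightarrow> finite (generate Q Z)"
proof (induction Z rule: finite_induct)
  case empty
  interpret comm_group Q by (rule cQ)
  show ?case by (simp add: generate_empty)
next
  case (insert z Z)
  interpret comm_group Q by (rule cQ)
  have z: "z \<in> carrier Q" and Zc: "Z \<subseteq> carrier Q" using insert by auto
  have fin: "finite (generate Q Z)" using insert Zc by simp
  have GZ: "generate Q Z \<subseteq> carrier Q" using generate_incl[OF Zc] .
  define S where "S = {z [^] (n::nat) \<otimes> g | n g. n < p \<and> g \<in> generate Q Z}"
  have finS: "finite S" unfolding S_def using fin by (intro finite_image_set2) simp_all
  have memS: "z [^] n \<otimes> g \<in> S" if "g \<in> generate Q Z" for n :: nat and g
  proof -
    have "z [^] n \<otimes> g = z [^] (n mod p) \<otimes> g"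
      using pow_mod[OF is_group z ex[OF z]] by simp
    moreover have "n mod p < p" using p by simp
    ultimately show ?thesis unfolding S_def using that by blast
  qed
  have Sc: "S \<subseteq> carrier Q"
  proof
    fix a assume "a \<in> S"
    then obtain n :: nat and g where "g \<in> generate Q Z" "a = z [^] n \<otimes> g" unfolding S_def by blast
    then show "a \<in> carrier Q" using GZ z by auto
  qed
  have sub: "subgroup S Q"
  proof (rule subgroupI[OF Sc])
    show "S \<noteq> {}" using memS[OF generate.one[of Q Z]] by blast
  next
    fix a assume "a \<in> S"
    then obtain n :: nat and g where ng: "n < p" "g \<in> generate Q Z" "a = z [^] n \<otimes> g" unfolding S_def by blast
    have gc: "g \<in> carrier Q" using ng GZ by auto
    have "z [^] (p - n) \<otimes> z [^] n = z [^] (p - n + n)" using z by (rule nat_pow_mult)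
    also have "p - n + n = p" using ng by simp
    finally have "z [^] (p - n) \<otimes> z [^] n = \<one>" using ex[OF z] by simp
    then have iz: "inv (z [^] n) = z [^] (p - n)" using z by (intro inv_equality) simp_all
    have "inv a = inv (z [^] n) \<otimes> inv g" unfolding ng(3) using gc z by (intro inv_mult) simp_all
    then have "inv a = z [^] (p - n) \<otimes> inv g" unfolding iz .
    then show "inv a \<in> S" using memS generate_m_inv_closed[OF Zc ng(2)] by simp
  next
    fix a b assume "a \<in> S" "b \<in> S"
    then obtain n m :: nat and g h where ng: "g \<in> generate Q Z" "a = z [^] n \<otimes> g"
      and mh: "h \<in> generate Q Z" "b = z [^] m \<otimes> h" unfolding S_def by blast
    have gc: "g \<in> carrier Q" "h \<in> carrier Q" using ng mh GZ by auto
    have zc: "z [^] n \<in> carrier Q" "z [^] m \<in> carrier Q" using z by simp_all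
    have "a \<otimes> b = z [^] n \<otimes> (g \<otimes> (z [^] m \<otimes> h))" unfolding ng(2) mh(2)
      using zc gc by (simp add: m_assoc)
    also have "g \<otimes> (z [^] m \<otimes> h) = z [^] m \<otimes> (g \<otimes> h)" using zc gc by (simp add: m_lcomm)
    also have "z [^] n \<otimes> (z [^] m \<otimes> (g \<otimes> h)) = (z [^] n \<otimes> z [^] m) \<otimes> (g \<otimes> h)"
      using zc gc by (simp add: m_assoc)
    also have "z [^] n \<otimes> z [^] m = z [^] (n + m)" using z by (rule nat_pow_mult)
    finally have "a \<otimes> b = z [^] (n + m) \<otimes> (g \<otimes> h)" .
    then show "a \<otimes> b \<in> S" using memS generate.eng[OF ng(1) mh(1)] by simp
  qed
  have "insert z Z \<subseteq> S"
  proof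
    fix y assume "y \<in> insert z Z"
    then show "y \<in> S"
    proof
      assume "y = z" then show ?thesis using memS[OF generate.one, of 1] z by simp
    next
      assume "y \<in> Z" then show ?thesis using memS[OF generate.incl[of y Z], of 0] Zc by auto
    qed
  qed
  then have "generate Q (insert z Z) \<subseteq> S" using generate_subgroup_incl sub by blast
  then show ?case using finS finite_subset by blast
qed

lemma Phi_quot_finite:
  fixes A (structure) and p :: nat
  assumes gA: "group A" and p: "0 < p" and Y: "finite Y" "Y \<subseteq> carrier A" and gen: "generate A Y = carrier A"
  shows "finite (rcosets (comm_pow_subgroup p A))"
proof -
  interpret group A by (rule gA)
  let ?N = "comm_pow_subgroup p A"
  have nN: "?N \<lhd> A" by (rule Phi_normal[OF gA])
  have sN: "subgroup ?N A" by (rule Phi_subgroup[OF gA])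
  interpret nn: normal ?N A by (rule nN)
  let ?Q = "A Mod ?N"
  have gQ: "group ?Q" by (rule nn.factorgroup_is_group)
  have rh: "(\<lambda>a. ?N #> a) \<in> hom A ?Q" by (rule nn.r_coset_hom_Mod)
  interpret gh: group_hom A ?Q "\<lambda>a. ?N #> a" using gA gQ rh by (simp add: group_hom_def group_hom_axioms_def)
  have cQ: "comm_group ?Q"
  proof (rule group.group_comm_groupI[OF gQ])
    fix a b assume "a \<in> carrier ?Q" "b \<in> carrier ?Q"
    then obtain x y where xy: "x \<in> carrier A" "y \<in> carrier A" "a = ?N #> x" "b = ?N #> y"
      unfolding FactGroup_def RCOSETS_def by auto
    have "(y \<otimes> x) \<otimes> inv (x \<otimes> y) = y \<otimes> x \<otimes> inv y \<otimes> inv x"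
      using xy by (simp add: inv_mult_group m_assoc)
    also have "\<dots> \<in> ?N" using comm_in_Phi[OF gA xy(2) xy(1)] .
    finally have yx: "(y \<otimes> x) \<otimes> inv (x \<otimes> y) \<in> ?N" .
    have "y \<otimes> x \<in> ?N #> (x \<otimes> y)"
      by (rule subgroup.rcos_module_rev[OF sN gA]) (use xy yx in auto)
    then have e: "?N #> (x \<otimes> y) = ?N #> (y \<otimes> x)"
      by (rule repr_independence[OF _ _ sN]) (use xy in simp)
    have m: "\<And>u v. u \<otimes>\<^bsub>?Q\<^esub> v = u <#> v" by (simp add: FactGroup_def)
    have "a \<otimes>\<^bsub>?Q\<^esub> b = ?N #> (x \<otimes> y)" unfolding m xy(3,4) by (rule nn.rcos_sum[OF xy(1,2)])
    also have "\<dots> = ?N #> (y \<otimes> x)" by (rule e)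
    also have "\<dots> = b \<otimes>\<^bsub>?Q\<^esub> a" unfolding m xy(3,4) by (rule nn.rcos_sum[OF xy(2,1), symmetric])
    finally show "a \<otimes>\<^bsub>?Q\<^esub> b = b \<otimes>\<^bsub>?Q\<^esub> a" .
  qed
  have ex: "z [^]\<^bsub>?Q\<^esub> p = \<one>\<^bsub>?Q\<^esub>" if "z \<in> carrier ?Q" for z
  proof -
    from that obtain x where x: "x \<in> carrier A" "z = ?N #> x"
      unfolding FactGroup_def RCOSETS_def by auto
    have "z [^]\<^bsub>?Q\<^esub> p = ?N #> (x [^] p)" using x gh.hom_nat_pow by simp
    also have "\<dots> = ?N" using subgroup.rcos_const[OF sN gA pow_in_Phi[OF gA x(1)]] .
    finally show ?thesis by simp
  qed
  have surjQ: "(\<lambda>a. ?N #> a) ` carrier A = carrier ?Q" by (simp add: carrier_FactGroup)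
  have "generate ?Q ((\<lambda>a. ?N #> a) ` Y) = carrier ?Q"
    using gh.generate_img[OF Y(2)] gen surjQ by simp
  moreover have "finite (generate ?Q ((\<lambda>a. ?N #> a) ` Y))"
  proof (rule finite_generate_exp[OF cQ p ex])
    show "finite ((\<lambda>a. ?N #> a) ` Y)" using Y by simp
    show "(\<lambda>a. ?N #> a) ` Y \<subseteq> carrier ?Q" using Y(2) surjQ by blast
  qed
  ultimately show ?thesis by (simp add: FactGroup_def)
qed


lemma schreier:
  fixes G (structure)
  assumes gG: "group G" and S: "finite S" "S \<subseteq> carrier G" "generate G S = carrier G"
    and sH: "subgroup H G" and finH: "finite (rcosets H)"
  shows "\<exists>Y. finite Y \<and> Y \<subseteq> H \<and> generate G Y = H"
proof -
  interpret group G by (rule gG)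
  have Hc: "H \<subseteq> carrier G" using sH subgroup.subset by blast
  define f where "f C = (if C = H then \<one> else (SOME y. y \<in> C))" for C
  define rep where "rep x = f (H #> x)" for x
  have ra: "rep x \<in> H #> x" if x: "x \<in> carrier G" for x
  proof (cases "H #> x = H")
    case True
    then show ?thesis using sH subgroup.one_closed by (simp add: rep_def f_def) 
  next
    case False
    have "x \<in> H #> x" using rcos_self[OF x sH] .
    then have "(SOME y. y \<in> H #> x) \<in> H #> x" by (rule someI)
    then show ?thesis using False by (simp add: rep_def f_def)
  qed
  have rb: "rep x \<in> carrier G" if x: "x \<in> carrier G" for x
    using ra[OF x] r_coset_subset_G[OF Hc x] by blast
  have rc: "H #> rep x = H #> x" if x: "x \<in> carrier G" for x
    using repr_independence[OF ra[OF x] x sH] by simp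
  have rd: "rep t = t" if t: "t \<in> rep ` carrier G" for t
  proof -
    from t obtain x where x: "x \<in> carrier G" "t = rep x" by blast
    have "rep t = f (H #> rep x)" using x by (simp add: rep_def)
    also have "\<dots> = f (H #> x)" using rc[OF x(1)] by simp
    finally show ?thesis using x by (simp add: rep_def)
  qed
  have re: "x \<otimes> inv (rep x) \<in> H" if x: "x \<in> carrier G" for x
  proof -
    have "rep x \<otimes> inv x \<in> H" using subgroup.rcos_module_imp[OF sH gG x ra[OF x]] .
    then have "inv (rep x \<otimes> inv x) \<in> H" by (rule subgroup.m_inv_closed[OF sH])
    moreover have "inv (rep x \<otimes> inv x) = x \<otimes> inv (rep x)"
      using x rb[OF x] by (simp add: inv_mult_group)
    ultimately show ?thesis by simp
  qed
  have rf: "rep (rep x \<otimes> y) = rep (x \<otimes> y)" if x: "x \<in> carrier G" and y: "y \<in> carrier G" for x y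
  proof -
    have "H #> (rep x \<otimes> y) = (H #> rep x) #> y" using coset_mult_assoc[OF Hc rb[OF x] y] by simp
    also have "\<dots> = (H #> x) #> y" using rc[OF x] by simp
    also have "\<dots> = H #> (x \<otimes> y)" using coset_mult_assoc[OF Hc x y] .
    finally show ?thesis by (simp add: rep_def)
  qed
  have rg: "rep h = \<one>" if h: "h \<in> H" for h
  proof -
    have "H #> h = H" using coset_join2[OF _ sH h] h Hc by blast
    then show ?thesis by (simp add: rep_def f_def)
  qed
  define T where "T = rep ` carrier G"
  have finT: "finite T"
  proof -
    have "T \<subseteq> f ` (rcosets H)"
    proof
      fix t assume "t \<in> T"
      then obtain x where x: "x \<in> carrier G" "t = f (H #> x)" unfolding T_def rep_def by blast
      then show "t \<in> f ` (rcosets H)" using rcosetsI[OF Hc x(1)] by blast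
    qed
    then show ?thesis using finH finite_subset by blast
  qed
  have Tc: "T \<subseteq> carrier G" unfolding T_def using rb by blast
  define S' where "S' = S \<union> (\<lambda>s. inv s) ` S"
  have S'c: "S' \<subseteq> carrier G" unfolding S'_def using S(2) by auto
  define Y where "Y = (\<lambda>(t,s). t \<otimes> s \<otimes> inv (rep (t \<otimes> s))) ` (T \<times> S')"
  have finY: "finite Y" unfolding Y_def S'_def using finT S(1) by simp
  have YH: "Y \<subseteq> H"
  proof
    fix y assume "y \<in> Y"
    then obtain ts where ts: "ts \<in> T \<times> S'" "y = (\<lambda>(t,s). t \<otimes> s \<otimes> inv (rep (t \<otimes> s))) ts"
      unfolding Y_def by (rule imageE)
    obtain t s where "ts = (t,s)" by fastforce
    then have "t \<in> carrier G" "s \<in> carrier G" "y = t \<otimes> s \<otimes> inv (rep (t \<otimes> s))" using ts Tc S'c by auto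
    then show "y \<in> H" using re[of "t \<otimes> s"] by simp
  qed
  have inY: "t \<otimes> s \<otimes> inv (rep (t \<otimes> s)) \<in> generate G Y" if "t \<in> T" "s \<in> S'" for t s
  proof -
    have "t \<otimes> s \<otimes> inv (rep (t \<otimes> s)) \<in> Y" unfolding Y_def using that by (intro image_eqI[where x="(t,s)"]) simp_all
    then show ?thesis by (rule generate.incl)
  qed
  have claim: "\<forall>t\<in>T. t \<otimes> g \<otimes> inv (rep (t \<otimes> g)) \<in> generate G Y" if g: "g \<in> generate G S" for g
    using g
  proof (induction g rule: generate.induct)
    case one
    show ?case
    proof
      fix t assume t: "t \<in> T"
      then have tc: "t \<in> carrier G" using Tc by blast
      have "t \<otimes> \<one> \<otimes> inv (rep (t \<otimes> \<one>)) = \<one>" using t tc rd[of t] by (simp add: T_def)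
      then show "t \<otimes> \<one> \<otimes> inv (rep (t \<otimes> \<one>)) \<in> generate G Y" using generate.one by metis
    qed
  next
    case (incl h)
    then show ?case using inY S'_def by blast
  next
    case (inv h)
    then show ?case using inY S'_def by blast
  next
    case (eng g1 g2)
    have g1c: "g1 \<in> carrier G" and g2c: "g2 \<in> carrier G"
      using eng(1,2) generate_in_carrier[OF S(2)] by auto
    show ?case
    proof
      fix t assume t: "t \<in> T"
      then have tc: "t \<in> carrier G" using Tc by blast
      define r1 where "r1 = rep (t \<otimes> g1)"
      have r1T: "r1 \<in> T" unfolding r1_def T_def using tc g1c by blast
      have r1c: "r1 \<in> carrier G" using r1T Tc by blast
      have e2: "rep (r1 \<otimes> g2) = rep (t \<otimes> (g1 \<otimes> g2))"
        unfolding r1_def using rf[of "t \<otimes> g1" g2] tc g1c g2c by (simp add: m_assoc)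
      define r2 where "r2 = rep (t \<otimes> (g1 \<otimes> g2))"
      have r2c: "r2 \<in> carrier G" unfolding r2_def using rb tc g1c g2c by simp
      have A: "t \<otimes> g1 \<otimes> inv r1 \<in> generate G Y" using eng.IH(1) t r1_def by blast
      have B0: "r1 \<otimes> g2 \<otimes> inv (rep (r1 \<otimes> g2)) \<in> generate G Y" using eng.IH(2) r1T by blast
      have B: "r1 \<otimes> g2 \<otimes> inv r2 \<in> generate G Y" using B0 unfolding e2 r2_def .
      have "(t \<otimes> g1 \<otimes> inv r1) \<otimes> (r1 \<otimes> g2 \<otimes> inv r2) = t \<otimes> (g1 \<otimes> g2) \<otimes> inv r2"
        using tc g1c g2c r1c r2c by (simp add: m_assoc m_assoc[symmetric, of "inv r1" r1])
      then show "t \<otimes> (g1 \<otimes> g2) \<otimes> inv (rep (t \<otimes> (g1 \<otimes> g2))) \<in> generate G Y"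
        using generate.eng[OF A B] r2_def by simp
    qed
  qed
  have "H \<subseteq> generate G Y"
  proof
    fix h assume h: "h \<in> H"
    then have hc: "h \<in> carrier G" using Hc by blast
    have oneT: "\<one> \<in> T" unfolding T_def using rg[OF subgroup.one_closed[OF sH]] by force
    have "\<one> \<otimes> h \<otimes> inv (rep (\<one> \<otimes> h)) \<in> generate G Y" using claim[of h] S(3) hc oneT by blast
    then show "h \<in> generate G Y" using hc rg[OF h] by simp
  qed
  moreover have "generate G Y \<subseteq> H" using generate_subgroup_incl[OF YH sH] .
  ultimately show ?thesis using finY YH by blast
qed


lemma preimage_index:
  assumes gA: "group A" and gB: "group B" and f: "f \<in> hom A B" and fs: "f ` carrier A = carrier B"
    and M: "M \<lhd> B"
  shows "{x \<in> carrier A. f x \<in> M} \<lhd> A \<and>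
         card (rcosets\<^bsub>A\<^esub> {x \<in> carrier A. f x \<in> M}) = card (rcosets\<^bsub>B\<^esub> M) \<and>
         (\<lambda>Y0. the_elem ((\<lambda>a. M #>\<^bsub>B\<^esub> f a) ` Y0)) \<in> iso (A Mod {x \<in> carrier A. f x \<in> M}) (B Mod M)"
proof -
  interpret A: group A by (rule gA)
  interpret B: group B by (rule gB)
  define h where "h = (\<lambda>a. M #>\<^bsub>B\<^esub> f a)"
  have gQ: "group (B Mod M)" using M normal.factorgroup_is_group by blast
  have hh: "h \<in> hom A (B Mod M)"
    using hom_compose[OF f normal.r_coset_hom_Mod[OF M]] by (simp add: h_def comp_def)
  interpret gh: group_hom A "B Mod M" h using gA gQ hh by (simp add: group_hom_def group_hom_axioms_def)
  have hs: "h ` carrier A = carrier (B Mod M)"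
  proof
    show "h ` carrier A \<subseteq> carrier (B Mod M)" using gh.hom_closed by blast
    show "carrier (B Mod M) \<subseteq> h ` carrier A"
    proof
      fix C assume "C \<in> carrier (B Mod M)"
      then obtain b where b: "b \<in> carrier B" "C = M #>\<^bsub>B\<^esub> b" by (auto simp: FactGroup_def RCOSETS_def)
      then obtain a where "a \<in> carrier A" "b = f a" using fs by blast
      then show "C \<in> h ` carrier A" using b by (auto simp: h_def)
    qed
  qed
  have Ms: "subgroup M B" using M normal_imp_subgroup by blast
  have ker: "kernel A (B Mod M) h = {x \<in> carrier A. f x \<in> M}"
  proof -
    have "M #>\<^bsub>B\<^esub> f x = M \<longleftrightarrow> f x \<in> M" if "x \<in> carrier A" for x
    proof -
      have fx: "f x \<in> carrier B" using f that by (auto simp: hom_def)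
      show ?thesis using B.rcos_self[OF fx Ms] subgroup.rcos_const[OF Ms gB] by auto
    qed
    then show ?thesis by (auto simp: kernel_def h_def)
  qed
  have iso: "(\<lambda>Y0. the_elem (h`Y0)) \<in> iso (A Mod kernel A (B Mod M) h) (B Mod M)"
    by (rule gh.FactGroup_iso_set[OF hs])
  then have "card (rcosets\<^bsub>A\<^esub> (kernel A (B Mod M) h)) = card (rcosets\<^bsub>B\<^esub> M)"
    by (auto simp: iso_def FactGroup_def dest: bij_betw_same_card)
  moreover have "kernel A (B Mod M) h \<lhd> A" by (rule gh.normal_kernel)
  ultimately have "{x \<in> carrier A. f x \<in> M} \<lhd> A \<and>
         card (rcosets\<^bsub>A\<^esub> {x \<in> carrier A. f x \<in> M}) = card (rcosets\<^bsub>B\<^esub> M) \<and>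
         (\<lambda>Y0. the_elem (h ` Y0)) \<in> iso (A Mod {x \<in> carrier A. f x \<in> M}) (B Mod M)"
    using iso unfolding ker by simp
  then show ?thesis by (simp add: h_def)
qed

lemma hom_restrict:
  assumes f: "f \<in> hom A B" and fH: "f ` H \<subseteq> K" and H: "H \<subseteq> carrier A"
  shows "f \<in> hom (A\<lparr>carrier := H\<rparr>) (B\<lparr>carrier := K\<rparr>)"
proof -
  have m: "f (x \<otimes>\<^bsub>A\<^esub> y) = f x \<otimes>\<^bsub>B\<^esub> f y" if "x \<in> H" "y \<in> H" for x y
  proof -
    have "x \<in> carrier A" "y \<in> carrier A" using that H by auto
    then show ?thesis using f unfolding hom_def by blast
  qed
  show ?thesis unfolding hom_def using fH m by (auto simp: Pi_def)
qed

lemma fin_quot: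
  fixes p :: nat
  assumes gG: "group G" and fg: "fin_gen G" and sH: "subgroup H G" and finH: "finite (rcosets\<^bsub>G\<^esub> H)"
    and p: "0 < p"
  shows "finite (rcosets\<^bsub>G\<lparr>carrier := H\<rparr>\<^esub> (comm_pow_subgroup p (G\<lparr>carrier := H\<rparr>)))"
proof -
  obtain S where S: "S \<subseteq> carrier G" "finite S" "generate G S = carrier G" using fg by (auto simp: fin_gen_def)
  obtain Y where Y: "finite Y" "Y \<subseteq> H" "generate G Y = H" using schreier[OF gG S(2,1,3) sH finH] by blast
  have gA: "group (G\<lparr>carrier := H\<rparr>)" using group.subgroup_imp_group[OF gG sH] .
  have "generate (G\<lparr>carrier := H\<rparr>) Y = H" using group.generate_consistent[OF gG Y(2) sH] Y(3) by simp
  then show ?thesis using Phi_quot_finite[OF gA p Y(1)] Y(2) by simp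
qed

lemma RG_lower_bound: "(real d - 1) / real c \<ge> (-1::real)"
proof (cases "c = 0")
  case True then show ?thesis by simp
next
  case False
  then have c: "real c \<ge> 1" by simp
  have "-1 * real c \<le> real d - 1" using c by simp
  then show ?thesis using c by (simp add: le_divide_eq)
qed

lemma RG_le:
  fixes G :: "'a monoid"
  assumes "H \<lhd> G" "card (rcosets\<^bsub>G\<^esub> H) = p ^ k"
  shows "RG p G \<le> (real (dp p (G\<lparr>carrier := H\<rparr>)) - 1) / real (card (rcosets\<^bsub>G\<^esub> H))"
  unfolding RG_def
proof (rule cInf_lower)
  show "(real (dp p (G\<lparr>carrier := H\<rparr>)) - 1) / real (card (rcosets\<^bsub>G\<^esub> H)) \<in> {(real (dp p (G\<lparr>carrier := H\<rparr>)) - 1) / real (card (rcosets\<^bsub>G\<^esub> H)) | H.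
                  H \<lhd> G \<and> (\<exists>k::nat. card (rcosets\<^bsub>G\<^esub> H) = p ^ k)}" using assms by blast
  show "bdd_below {(real (dp p (G\<lparr>carrier := H\<rparr>)) - 1) / real (card (rcosets\<^bsub>G\<^esub> H)) | H.
                  H \<lhd> G \<and> (\<exists>k::nat. card (rcosets\<^bsub>G\<^esub> H) = p ^ k)}"
    by (rule bdd_belowI[of _ "-1"]) (auto intro: RG_lower_bound)
qed


context dsys
begin

lemma main_bound:
  fixes p :: nat and H
  assumes fg: "\<And>i. fin_gen (G i)" and p: "0 < p" and H: "H \<lhd> L" and idx: "card (rcosets\<^bsub>L\<^esub> H) = p ^ k"
  shows "\<exists>j0. \<forall>j\<ge>j0. RG p (G j) \<le> (real (dp p (L\<lparr>carrier := H\<rparr>)) - 1) / real (card (rcosets\<^bsub>L\<^esub> H))"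
proof -
  have gL: "group L" by (rule group_L)
  define Hj where "Hj j = {x \<in> carrier (G j). phi j x \<in> H}" for j
  define A where "A j = (G j)\<lparr>carrier := Hj j\<rparr>" for j
  define B where "B = L\<lparr>carrier := H\<rparr>"
  define N where "N j = comm_pow_subgroup p (A j)" for j
  define M where "M = comm_pow_subgroup p B"
  define c where "c j = card (rcosets\<^bsub>A j\<^esub> (N j))" for j
  have pre: "Hj j \<lhd> G j \<and> card (rcosets\<^bsub>G j\<^esub> (Hj j)) = card (rcosets\<^bsub>L\<^esub> H)" for j
    using preimage_index[OF grp group_L phi_hom phi_surj H] unfolding Hj_def by blast
  have sHj: "subgroup (Hj j) (G j)" for j using pre normal_imp_subgroup by blast
  have Hjc: "Hj j \<subseteq> carrier (G j)" for j unfolding Hj_def by blast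
  have gA: "group (A j)" for j unfolding A_def using group.subgroup_imp_group[OF grp sHj] .
  have cA: "carrier (A j) = Hj j" for j by (simp add: A_def)
  have sH: "subgroup H L" using H normal_imp_subgroup by blast
  have Hc: "H \<subseteq> carrier L" using sH subgroup.subset by blast
  have gB: "group B" unfolding B_def using group.subgroup_imp_group[OF gL sH] .
  have cB: "carrier B = H" by (simp add: B_def)
  have finHj: "finite (rcosets\<^bsub>G j\<^esub> (Hj j))" for j
  proof -
    have "card (rcosets\<^bsub>G j\<^esub> (Hj j)) > 0" using pre idx p by simp
    then show ?thesis using card_gt_0_iff by blast
  qed
  have finc: "finite (rcosets\<^bsub>A j\<^esub> (N j))" for j
    unfolding A_def N_def using fin_quot[OF grp fg sHj finHj p] .
  have nN: "N j \<lhd> A j" for j unfolding N_def by (rule Phi_normal[OF gA])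
  have nM: "M \<lhd> B" unfolding M_def by (rule Phi_normal[OF gB])
  have piH: "\<pi> j k ` Hj j = Hj k" if jk: "j \<le> k" for j k
  proof
    show "\<pi> j k ` Hj j \<subseteq> Hj k"
      unfolding Hj_def using jk by (auto simp: pi_closed phi_push)
    show "Hj k \<subseteq> \<pi> j k ` Hj j"
    proof
      fix y assume y: "y \<in> Hj k"
      then have yc: "y \<in> carrier (G k)" using Hjc by blast
      then obtain x where x: "x \<in> carrier (G j)" "y = \<pi> j k x" using surj[OF jk] by blast
      have "phi j x = phi k y" using x jk by (simp add: phi_push)
      then have "x \<in> Hj j" using x y unfolding Hj_def by simp
      then show "y \<in> \<pi> j k ` Hj j" using x by blast
    qed
  qed
  have piA: "\<pi> j k \<in> hom (A j) (A k)" if jk: "j \<le> k" for j k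
    unfolding A_def using hom_restrict[OF hom[OF jk] _ Hjc] piH[OF jk] by simp
  have piN: "\<pi> j k ` N j = N k" if jk: "j \<le> k" for j k
    unfolding N_def using Phi_img[OF gA gA piA[OF jk]] piH[OF jk] cA by simp
  have step: "c k \<le> c j \<and> (c k = c j \<longrightarrow> {x \<in> Hj j. \<pi> j k x \<in> N k} = N j)" if jk: "j \<le> k" for j k
    using surj_hom_index[OF gA gA piA[OF jk] _ nN nN _ finc] piH[OF jk] piN[OF jk] cA
    unfolding c_def by simp
  have phiH: "phi j ` Hj j = H" for j
  proof
    show "phi j ` Hj j \<subseteq> H" unfolding Hj_def by blast
    show "H \<subseteq> phi j ` Hj j"
    proof
      fix y assume y: "y \<in> H"
      then have "y \<in> phi j ` carrier (G j)" using phi_surj Hc by blast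
      then obtain x where "x \<in> carrier (G j)" "y = phi j x" by blast
      then show "y \<in> phi j ` Hj j" using y unfolding Hj_def by blast
    qed
  qed
  have phiA: "phi j \<in> hom (A j) B" for j
    unfolding A_def B_def using hom_restrict[OF phi_hom _ Hjc] phiH by simp
  have phiN: "phi j ` N j = M" for j
    unfolding N_def M_def using Phi_img[OF gA gB phiA] phiH cA cB by simp
  obtain j0 where j0: "\<And>j. c j0 \<le> c j"
  proof -
    let ?P = "\<lambda>n. \<exists>j. c j = n"
    obtain j0 where "c j0 = (LEAST n. ?P n)" using LeastI_ex[of ?P] by blast
    moreover have "(LEAST n. ?P n) \<le> c j" for j by (rule Least_le) blast
    ultimately show ?thesis using that by metis
  qed
  show ?thesis
  proof (intro exI[of _ j0] allI impI)
    fix j assume jj: "j0 \<le> j"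
    have eqN: "{x \<in> Hj j. \<pi> j k x \<in> N k} = N j" if jk: "j \<le> k" for k
    proof -
      have "c k = c j" using step[OF jk] step[OF jj] step[OF order.trans[OF jj jk]] j0[of k] by linarith
      then show ?thesis using step[OF jk] by blast
    qed
    have Nsub: "N j \<subseteq> Hj j" using nN[of j] normal_imp_subgroup subgroup.subset cA by blast
    have K: "{x \<in> carrier (A j). phi j x \<in> M} = N j"
    proof
      show "N j \<subseteq> {x \<in> carrier (A j). phi j x \<in> M}" using Nsub phiN cA by blast
      show "{x \<in> carrier (A j). phi j x \<in> M} \<subseteq> N j"
      proof
        fix x assume "x \<in> {x \<in> carrier (A j). phi j x \<in> M}"
        then have x: "x \<in> Hj j" "phi j x \<in> M" using cA by auto
        then obtain w where w: "w \<in> N j" "phi j w = phi j x" using phiN[of j] by (metis imageE)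
        have xc: "x \<in> carrier (G j)" and wc: "w \<in> carrier (G j)" using x w Nsub Hjc by blast+
        interpret Gj: group "G j" by (rule grp)
        interpret gh: group_hom "G j" L "phi j" using grp gL phi_hom by (simp add: group_hom_def group_hom_axioms_def)
        define y where "y = x \<otimes>\<^bsub>G j\<^esub> inv\<^bsub>G j\<^esub> w"
        have yc: "y \<in> carrier (G j)" unfolding y_def using xc wc by simp
        have "phi j y = phi j x \<otimes>\<^bsub>L\<^esub> inv\<^bsub>L\<^esub> phi j w" unfolding y_def using xc wc by simp
        also have "\<dots> = \<one>\<^bsub>L\<^esub>" using w(2) xc by simp
        finally obtain k where k: "j \<le> k" "\<pi> j k y = \<one>\<^bsub>G k\<^esub>" using phi_one_iff[OF yc] by blast
        interpret Gk: group "G k" by (rule grp)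
        have "\<pi> j k y = \<pi> j k x \<otimes>\<^bsub>G k\<^esub> inv\<^bsub>G k\<^esub> \<pi> j k w"
          unfolding y_def using xc wc k(1) by (simp add: pi_mult pi_inv)
        then have "\<pi> j k x \<otimes>\<^bsub>G k\<^esub> inv\<^bsub>G k\<^esub> \<pi> j k w = \<one>\<^bsub>G k\<^esub>" using k(2) by simp
        moreover have "\<pi> j k x = (\<pi> j k x \<otimes>\<^bsub>G k\<^esub> inv\<^bsub>G k\<^esub> \<pi> j k w) \<otimes>\<^bsub>G k\<^esub> \<pi> j k w"
          using pi_closed[OF k(1) xc] pi_closed[OF k(1) wc] by (simp add: Gk.m_assoc)
        ultimately have "\<pi> j k x = \<pi> j k w" using pi_closed[OF k(1) wc] by simp
        moreover have "\<pi> j k w \<in> N k" using piN[OF k(1)] w(1) by blast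
        ultimately have "x \<in> {x \<in> Hj j. \<pi> j k x \<in> N k}" using x by simp
        then show "x \<in> N j" using eqN[OF k(1)] by simp
      qed
    qed
    obtain F where F: "F \<in> iso (A j Mod N j) (B Mod M)"
      using preimage_index[OF gA gB phiA _ nM, of j] phiH cA cB K by auto
    have gQ: "group (A j Mod N j)" using nN normal.factorgroup_is_group by blast
    have gQ': "group (B Mod M)" using nM normal.factorgroup_is_group by blast
    have Fi: "inv_into (carrier (A j Mod N j)) F \<in> iso (B Mod M) (A j Mod N j)"
      by (rule group.iso_set_sym[OF gQ F])
    have finQ: "finite (carrier (A j Mod N j))" using finc by (simp add: FactGroup_def)
    have "carrier (B Mod M) = F ` carrier (A j Mod N j)"
      using F by (auto simp: iso_def bij_betw_def)
    then have finQ': "finite (carrier (B Mod M))" using finQ by simp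
    have dle: "dgen (A j Mod N j) \<le> dgen (B Mod M)"
      using dgen_surj[OF gQ' gQ _ _ finQ'] Fi by (auto simp: iso_def bij_betw_def)
    have "RG p (G j) \<le> (real (dp p (A j)) - 1) / real (card (rcosets\<^bsub>G j\<^esub> (Hj j)))"
      unfolding A_def using RG_le[of "Hj j" "G j" p k] pre idx by simp
    also have "\<dots> \<le> (real (dp p B) - 1) / real (card (rcosets\<^bsub>L\<^esub> H))"
    proof -
      have "dp p (A j) \<le> dp p B" using dle by (simp add: dp_def N_def M_def)
      then have "real (dp p (A j)) - 1 \<le> real (dp p B) - 1" by simp
      then show ?thesis using pre[of j] by (simp add: divide_right_mono)
    qed
    finally show "RG p (G j) \<le> (real (dp p (L\<lparr>carrier := H\<rparr>)) - 1) / real (card (rcosets\<^bsub>L\<^esub> H))"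
      by (simp add: B_def)
  qed
qed

end


lemma rcosets_carrier_self:
  fixes G (structure)
  assumes gG: "group G"
  shows "rcosets (carrier G) = {carrier G}"
proof -
  interpret group G by (rule gG)
  have "carrier G #> a = carrier G" if "a \<in> carrier G" for a
    using coset_join2[OF that subgroup_self that] .
  then show ?thesis unfolding RCOSETS_def by auto
qed

theorem lemma3p5:
  fixes G :: "'i::linorder \<Rightarrow> 'a monoid"
    and \<pi> :: "'i \<Rightarrow> 'i \<Rightarrow> 'a \<Rightarrow> 'a"
    and p :: nat
  assumes least: "\<exists>i0::'i. \<forall>i. i0 \<le> i"
    and grp: "\<And>i. group (G i)"
    and fg: "\<And>i. fin_gen (G i)"
    and hom: "\<And>i j. i \<le> j \<Longrightarrow> \<pi> i j \<in> hom (G i) (G j)"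
    and surj: "\<And>i j. i \<le> j \<Longrightarrow> \<pi> i j ` carrier (G i) = carrier (G j)"
    and refl: "\<And>i x. x \<in> carrier (G i) \<Longrightarrow> \<pi> i i x = x"
    and comp: "\<And>i j k x. i \<le> j \<Longrightarrow> j \<le> k \<Longrightarrow> x \<in> carrier (G i) \<Longrightarrow>
                 \<pi> j k (\<pi> i j x) = \<pi> i k x"
    and prime: "Factorial_Ring.prime p"
  shows "Limsup at_top (\<lambda>i. ereal (RG p (G i))) \<le> ereal (RG p (dirlim G \<pi>))"
proof -
  interpret dsys G \<pi> by (rule dsys.intro[OF grp hom surj refl comp])
  have p: "0 < p" using prime by (simp add: prime_gt_0_nat)
  let ?S = "{(real (dp p ((dirlim G \<pi>)\<lparr>carrier := H\<rparr>)) - 1) / real (card (rcosets\<^bsub>dirlim G \<pi>\<^esub> H)) | H.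
                  H \<lhd> (dirlim G \<pi>) \<and> (\<exists>k::nat. card (rcosets\<^bsub>dirlim G \<pi>\<^esub> H) = p ^ k)}"
  have RGd: "RG p (dirlim G \<pi>) = Inf ?S" by (simp add: RG_def)
  have ne: "?S \<noteq> {}"
  proof -
    have "carrier L \<lhd> L" using group.normal_self[OF group_L] .
    moreover have "card (rcosets\<^bsub>L\<^esub> (carrier L)) = p ^ 0" using rcosets_carrier_self[OF group_L] by simp
    ultimately show ?thesis by blast
  qed
  have bdd: "bdd_below ?S" by (rule bdd_belowI[of _ "-1"]) (auto intro: RG_lower_bound)
  have e: "ereal (Inf ?S) = (INF v\<in>?S. ereal v)" by (rule ereal_Inf'[OF bdd ne])
  have "Limsup at_top (\<lambda>i. ereal (RG p (G i))) \<le> ereal v" if v: "v \<in> ?S" for v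
  proof -
    from v obtain H k where H: "H \<lhd> L" "card (rcosets\<^bsub>L\<^esub> H) = p ^ k"
      "v = (real (dp p (L\<lparr>carrier := H\<rparr>)) - 1) / real (card (rcosets\<^bsub>L\<^esub> H))" by blast
    obtain j0 where j0: "\<forall>j\<ge>j0. RG p (G j) \<le> v" using main_bound[OF fg p H(1,2)] H(3) by blast
    have "eventually (\<lambda>j. ereal (RG p (G j)) \<le> ereal v) at_top"
      unfolding eventually_at_top_linorder using j0 by auto
    then show ?thesis by (rule Limsup_bounded)
  qed
  then have "Limsup at_top (\<lambda>i. ereal (RG p (G i))) \<le> (INF v\<in>?S. ereal v)" by (rule INF_greatest)
  then show ?thesis using RGd e by simp
qed


end
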